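(* Let $0<d_{\min}<d_{\max}$, $N\ge 3$, $T_{\rm s}>0$. For $R_1,\dots,R_N\in[d_{\min},d_{\max}]$ and $\theta_1,\dots,\theta_N\in[0,2\pi)$ with $\sum_{j<k}\sin^2(\theta_j-\theta_k)>0$, let $$S(R,\theta)=\frac{\sum_{k=1}^N R_k^{-2}}{T_{\rm s}\sum_{j<k} R_j^{-2}R_k^{-2}\sin^2(\theta_j-\theta_k)}.$$ Then $S(R,\theta)\ge \frac{4d_{\min}^2}{NT_{\rm s}}$ for all such $(R,\theta)$, and equality holds when $R_1=\dots=R_N=d_{\min}$ and $\theta_k=2\pi k/N$, $k=1,\dots,N$ (anchors at the vertices of a regular $N$-gon inscribed in the circle of radius $d_{\min}$). In particular, the minimum of $S$ over this set, and also the minimum of the GDOP $G(R,\theta)=\frac{NR^2}{T_{\rm s}\sum_{j<k}\sin^2(\theta_j-\theta_k)}$ over $R\in[d_{\min},d_{\max}]$ and such $\theta$, both equal $4d_{\min}^2/(NT_{\rm s})$.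
   Context: $S$ is the squared position error bound for anchors at polar positions $(R_k,\theta_k)$ relative to the target at the origin; $T_{\rm s}>0$ is a fixed constant. *)

theory Defs
  imports "HOL-Analysis.Analysis"
begin

definition sin2sum :: "nat \<Rightarrow> (nat \<Rightarrow> real) \<Rightarrow> real" where
  "sin2sum N th = (\<Sum>j\<in>{1..N}. \<Sum>k\<in>{j<..N}. (sin (th j - th k))^2)"

definition S_bound :: "real \<Rightarrow> nat \<Rightarrow> (nat \<Rightarrow> real) \<Rightarrow> (nat \<Rightarrow> real) \<Rightarrow> real" where
  "S_bound Ts N R th =
     (\<Sum>k\<in>{1..N}. 1 / (R k)^2) /
     (Ts * (\<Sum>j\<in>{1..N}. \<Sum>k\<in>{j<..N}. (1 / (R j)^2) * (1 / (R k)^2) * (sin (th j - th k))^2))"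

definition GDOP :: "real \<Rightarrow> nat \<Rightarrow> real \<Rightarrow> (nat \<Rightarrow> real) \<Rightarrow> real" where
  "GDOP Ts N R th = real N * R^2 / (Ts * sin2sum N th)"

definition admissible :: "real \<Rightarrow> real \<Rightarrow> nat \<Rightarrow> (nat \<Rightarrow> real) \<Rightarrow> (nat \<Rightarrow> real) \<Rightarrow> bool" where
  "admissible dmin dmax N R th \<longleftrightarrow>
     (\<forall>k\<in>{1..N}. dmin \<le> R k \<and> R k \<le> dmax \<and> 0 \<le> th k \<and> th k < 2 * pi) \<and>
     sin2sum N th > 0"

definition Min_on :: "real set \<Rightarrow> real \<Rightarrow> bool" where
  "Min_on A m \<longleftrightarrow> m \<in> A \<and> (\<forall>x\<in>A. m \<le> x)"

end

theory Submission
  imports Defs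
begin

lemma sin2h: "(sin (x::real))^2 = (1 - cos (2*x))/2" by (simp add: cos_double_sin)

lemma alg1: "(x::real) = (1 - (c * d + e * f))/2 \<Longrightarrow> 4 * (a * b * x) = 2 * b * a - 2 * (b * c) * (a * d) - 2 * (b * e) * (a * f)"
proof -
  assume h: "x = (1 - (c * d + e * f))/2"
  have h2: "2*x = 1 - c*d - e*f" using h by simp
  have "4 * (a * b * x) = 2*a*b*(2*x)" by simp
  also have "\<dots> = 2*a*b*(1 - c*d - e*f)" by (simp only: h2)
  finally show ?thesis by (simp add: algebra_simps)
qed

lemma alg2:
  fixes T G W X Y a b c :: real
  assumes "4*T = W^2 - X^2 - Y^2" "4*G = 2*a*W - 2*b*X - 2*c*Y" "a^2 - b^2 - c^2 = 0"
  shows "4*(T+G) = (W+a)^2 - (X+b)^2 - (Y+c)^2"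
proof -
  have "(W+a)^2 - (X+b)^2 - (Y+c)^2 = (W^2 - X^2 - Y^2) + (2*a*W - 2*b*X - 2*c*Y) + (a^2 - b^2 - c^2)"
    by (simp add: power2_eq_square algebra_simps)
  then show ?thesis using assms by simp
qed

lemma key:
  fixes w t :: "nat \<Rightarrow> real"
  shows "4 * (\<Sum>j\<in>{1..n}. \<Sum>k\<in>{j<..n}. w j * w k * (sin (t j - t k))^2)
    = (\<Sum>k\<in>{1..n}. w k)^2 - (\<Sum>k\<in>{1..n}. w k * cos (2*t k))^2 - (\<Sum>k\<in>{1..n}. w k * sin (2*t k))^2"
proof (induction n)
  case 0 then show ?case by simp
next
  case (Suc n)
  let ?g = "\<lambda>j k. w j * w k * (sin (t j - t k))^2"
  have inner: "(\<Sum>k\<in>{j<..Suc n}. ?g j k) = (\<Sum>k\<in>{j<..n}. ?g j k) + ?g j (Suc n)" if "j \<in> {1..n}" for j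
  proof -
    have "{j<..Suc n} = insert (Suc n) {j<..n}" using that by auto
    then show ?thesis by simp
  qed
  have "(\<Sum>j\<in>{1..Suc n}. \<Sum>k\<in>{j<..Suc n}. ?g j k) = (\<Sum>j\<in>{1..n}. \<Sum>k\<in>{j<..Suc n}. ?g j k)"
    by simp
  also have "\<dots> = (\<Sum>j\<in>{1..n}. \<Sum>k\<in>{j<..n}. ?g j k) + (\<Sum>j\<in>{1..n}. ?g j (Suc n))"
    using inner by (simp add: sum.distrib)
  finally have A: "(\<Sum>j\<in>{1..Suc n}. \<Sum>k\<in>{j<..Suc n}. ?g j k) = (\<Sum>j\<in>{1..n}. \<Sum>k\<in>{j<..n}. ?g j k) + (\<Sum>j\<in>{1..n}. ?g j (Suc n))" .
  have gj: "4 * ?g j (Suc n) = 2 * w (Suc n) * w j - 2 * (w (Suc n) * cos (2 * t (Suc n))) * (w j * cos (2*t j))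
     - 2 * (w (Suc n) * sin (2 * t (Suc n))) * (w j * sin (2*t j))" for j
  proof -
    have "(sin (t j - t (Suc n)))^2 = (1 - cos (2*(t j - t (Suc n))))/2"
      by (rule sin2h)
    also have "cos (2*(t j - t (Suc n))) = cos (2*t (Suc n)) * cos (2*t j) + sin (2*t (Suc n)) * sin (2*t j)"
      by (simp add: right_diff_distrib cos_diff)
    finally have h: "(sin (t j - t (Suc n)))^2 = (1 - (cos (2*t (Suc n)) * cos (2*t j) + sin (2*t (Suc n)) * sin (2*t j)))/2" .
    show ?thesis by (rule alg1[OF h])
  qed
  have B: "4 * (\<Sum>j\<in>{1..n}. ?g j (Suc n)) = 2 * w (Suc n) * (\<Sum>k\<in>{1..n}. w k)
     - 2 * (w (Suc n) * cos (2 * t (Suc n))) * (\<Sum>k\<in>{1..n}. w k * cos (2*t k))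
     - 2 * (w (Suc n) * sin (2 * t (Suc n))) * (\<Sum>k\<in>{1..n}. w k * sin (2*t k))"
  proof -
    have "4 * (\<Sum>j\<in>{1..n}. ?g j (Suc n)) = (\<Sum>j\<in>{1..n}. 4 * ?g j (Suc n))"
      by (rule sum_distrib_left)
    also have "\<dots> = (\<Sum>j\<in>{1..n}. 2 * w (Suc n) * w j - 2 * (w (Suc n) * cos (2 * t (Suc n))) * (w j * cos (2*t j))
     - 2 * (w (Suc n) * sin (2 * t (Suc n))) * (w j * sin (2*t j)))"
      by (rule sum.cong[OF refl], rule gj)
    also have "\<dots> = 2 * w (Suc n) * (\<Sum>k\<in>{1..n}. w k)
     - 2 * (w (Suc n) * cos (2 * t (Suc n))) * (\<Sum>k\<in>{1..n}. w k * cos (2*t k))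
     - 2 * (w (Suc n) * sin (2 * t (Suc n))) * (\<Sum>k\<in>{1..n}. w k * sin (2*t k))"
      by (simp only: sum_subtractf sum_distrib_left)
    finally show ?thesis .
  qed
  have C: "(w (Suc n))^2 - (w (Suc n) * cos (2 * t (Suc n)))^2 - (w (Suc n) * sin (2 * t (Suc n)))^2 = 0"
  proof -
    have "(w (Suc n))^2 - (w (Suc n) * cos (2 * t (Suc n)))^2 - (w (Suc n) * sin (2 * t (Suc n)))^2 = (w (Suc n))^2 * (1 - ((cos (2 * t (Suc n)))^2 + (sin (2 * t (Suc n)))^2))"
      by (simp only: power_mult_distrib right_diff_distrib distrib_left mult_1_right diff_diff_eq)
    also have "\<dots> = 0" by (simp only: sin_cos_squared_add2) simp
    finally show ?thesis .
  qed
  have s1: "(\<Sum>k\<in>{1..Suc n}. w k) = (\<Sum>k\<in>{1..n}. w k) + w (Suc n)" by simp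
  have s2: "(\<Sum>k\<in>{1..Suc n}. w k * cos (2*t k)) = (\<Sum>k\<in>{1..n}. w k * cos (2*t k)) + w (Suc n) * cos (2*t (Suc n))" by simp
  have s3: "(\<Sum>k\<in>{1..Suc n}. w k * sin (2*t k)) = (\<Sum>k\<in>{1..n}. w k * sin (2*t k)) + w (Suc n) * sin (2*t (Suc n))" by simp
  show ?case unfolding A s1 s2 s3 by (rule alg2[OF Suc.IH B C])
qed

lemma roots:
  assumes N: "N \<ge> (3::nat)"
  shows "(\<Sum>k\<in>{1..N}. cos (2 * (2*pi*real k/real N - 2*pi/real N))) = 0
       \<and> (\<Sum>k\<in>{1..N}. sin (2 * (2*pi*real k/real N - 2*pi/real N))) = 0"
proof -
  define \<omega> where "\<omega> = cis (4*pi/real N)"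
  have Npos: "real N > 0" using N by simp
  have ne: "\<omega> \<noteq> 1"
  proof
    assume "\<omega> = 1"
    then have "cos (4*pi/real N) = 1" unfolding \<omega>_def by (simp add: complex_eq_iff)
    then obtain m :: int where m: "4*pi/real N = real_of_int m * 2 * pi"
      by (auto simp: cos_one_2pi_int)
    then have "2 = real_of_int m * real N" using Npos by (simp add: field_simps)
    then have "real_of_int (m * int N) = real_of_int 2" by simp
    then have e: "m * int N = 2" by (simp only: of_int_eq_iff)
    show False
    proof (cases "m \<le> 0")
      case True
      then have "m * int N \<le> 0" by (simp add: mult_nonpos_nonneg)
      then show False using e by simp
    next
      case False
      then have "1 * int N \<le> m * int N" by (intro mult_right_mono) auto
      then show False using e N by simp
    qed
  qed
  have pw: "\<omega> ^ N = 1"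
  proof -
    have "\<omega> ^ N = cis (real N * (4*pi/real N))" unfolding \<omega>_def by (simp only: Complex.DeMoivre)
    also have "real N * (4*pi/real N) = 2 * (2*pi)" using Npos by simp
    also have "cis (2 * (2*pi)) = cis (2*pi) ^ 2" by (simp only: Complex.DeMoivre) simp
    also have "cis (2*pi) = 1" by (simp add: complex_eq_iff)
    finally show ?thesis by simp
  qed
  have g: "(\<Sum>k<N. \<omega>^k) = 0"
    using ne pw by (simp add: geometric_sum)
  have "(\<Sum>k\<in>{1..N}. cis (2 * (2*pi*real k/real N - 2*pi/real N))) = (\<Sum>k<N. cis (2 * (2*pi*real (Suc k)/real N - 2*pi/real N)))"
    unfolding One_nat_def by (rule sum.atLeast1_atMost_eq)
  also have "\<dots> = (\<Sum>k<N. \<omega>^k)"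
  proof (rule sum.cong[OF refl])
    fix k assume "k \<in> {..<N}"
    have "2 * (2*pi*real (Suc k)/real N - 2*pi/real N) = real k * (4*pi/real N)"
      using Npos by (simp add: field_simps)
    then show "cis (2 * (2*pi*real (Suc k)/real N - 2*pi/real N)) = \<omega>^k"
      unfolding \<omega>_def by (simp add: Complex.DeMoivre)
  qed
  finally have z: "(\<Sum>k\<in>{1..N}. cis (2 * (2*pi*real k/real N - 2*pi/real N))) = 0" using g by simp
  have "Re (\<Sum>k\<in>{1..N}. cis (2 * (2*pi*real k/real N - 2*pi/real N))) = 0"
       "Im (\<Sum>k\<in>{1..N}. cis (2 * (2*pi*real k/real N - 2*pi/real N))) = 0" using z by simp_all
  then show ?thesis by (simp add: Re_sum Im_sum)
qed

lemma keyu: "4 * sin2sum n t = (real n)^2 - (\<Sum>k\<in>{1..n}. cos (2*t k))^2 - (\<Sum>k\<in>{1..n}. sin (2*t k))^2"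
  using key[of "\<lambda>_. 1" t n] by (simp add: sin2sum_def)

lemma sin2sum_le: "4 * sin2sum n t \<le> (real n)^2"
  using keyu[of n t] by (smt (verit) zero_le_power2)

lemma Dle: fixes w t :: "nat \<Rightarrow> real" shows "4 * (\<Sum>j\<in>{1..n}. \<Sum>k\<in>{j<..n}. w j * w k * (sin (t j - t k))^2) \<le> (\<Sum>k\<in>{1..n}. w k)^2"
  using key[of w t n] by (smt (verit) zero_le_power2)

lemma shiftS: "S_bound Ts N R (\<lambda>k. f k - c) = S_bound Ts N R f"
  by (simp add: S_bound_def)

lemma shift2: "sin2sum N (\<lambda>k. f k - c) = sin2sum N f"
  by (simp add: sin2sum_def)

lemma sin2sum_reg:
  assumes "N \<ge> 3"
  shows "4 * sin2sum N (\<lambda>k. 2*pi*real k/real N - 2*pi/real N) = (real N)^2"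
  using keyu[of N "\<lambda>k. 2*pi*real k/real N - 2*pi/real N"] roots[OF assms] by simp

lemma S_reg:
  assumes "N \<ge> 3" "dmin > 0" "Ts > 0"
  shows "S_bound Ts N (\<lambda>k. dmin) (\<lambda>k. 2*pi*real k/real N - 2*pi/real N) = 4*dmin^2/(real N*Ts)"
proof -
  let ?t = "\<lambda>k. 2*pi*real k/real N - 2*pi/real N"
  have D: "(\<Sum>j\<in>{1..N}. \<Sum>k\<in>{j<..N}. 1 / dmin^2 * (1 / dmin^2) * (sin (?t j - ?t k))^2)
       = (1/dmin^2 * (1/dmin^2)) * sin2sum N ?t"
    unfolding sin2sum_def by (simp add: sum_distrib_left)
  have s4: "sin2sum N ?t = (real N)^2 / 4" using sin2sum_reg[OF assms(1)] by simp
  have Np: "real N > 0" using assms by simp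
  show ?thesis
    unfolding S_bound_def D s4 using Np assms by (simp add: field_simps power2_eq_square)
qed

lemma LB:
  assumes adm: "admissible dmin dmax N R th" and d: "0 < dmin" and N: "N \<ge> 1" and Ts: "Ts > 0"
  shows "S_bound Ts N R th \<ge> 4 * dmin^2 / (real N * Ts)"
proof -
  define w where "w = (\<lambda>k. 1 / (R k)^2)"
  define W where "W = (\<Sum>k\<in>{1..N}. w k)"
  define D where "D = (\<Sum>j\<in>{1..N}. \<Sum>k\<in>{j<..N}. w j * w k * (sin (th j - th k))^2)"
  have rng: "dmin \<le> R k" "R k \<le> dmax" if "k \<in> {1..N}" for k
    using adm that unfolding admissible_def by auto
  have dmax: "dmax > 0" using rng[of 1] N d by auto
  have wpos: "w k > 0" if "k \<in> {1..N}" for k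
    using rng[OF that] d unfolding w_def by simp
  have wle: "w k \<le> 1/dmin^2" if "k \<in> {1..N}" for k
    using rng[OF that] d unfolding w_def by (intro divide_left_mono power_mono) auto
  have wge: "w k \<ge> 1/dmax^2" if "k \<in> {1..N}" for k
    using rng[OF that] d unfolding w_def by (intro divide_left_mono power_mono) auto
  have Wle: "W \<le> real N / dmin^2"
    using sum_bounded_above[of "{1..N}" w "1/dmin^2"] wle unfolding W_def by simp
  have Wpos: "W > 0" unfolding W_def using N wpos by (intro sum_pos) auto
  have DW: "4 * D \<le> W^2" unfolding D_def W_def by (rule Dle)
  have "D \<ge> (\<Sum>j\<in>{1..N}. \<Sum>k\<in>{j<..N}. (1/dmax^2) * (1/dmax^2) * (sin (th j - th k))^2)"
    unfolding D_def
  proof (intro sum_mono)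
    fix j k assume j: "j \<in> {1..N}" and k: "k \<in> {j<..N}"
    then have k': "k \<in> {1..N}" by auto
    have "(1/dmax^2) * (1/dmax^2) \<le> w j * w k"
      using wge[OF j] wge[OF k'] wpos[OF j] dmax by (intro mult_mono) auto
    then show "(1/dmax^2) * (1/dmax^2) * (sin (th j - th k))^2 \<le> w j * w k * (sin (th j - th k))^2"
      by (intro mult_right_mono) auto
  qed
  also have "(\<Sum>j\<in>{1..N}. \<Sum>k\<in>{j<..N}. (1/dmax^2) * (1/dmax^2) * (sin (th j - th k))^2)
      = (1/dmax^2) * (1/dmax^2) * sin2sum N th"
    unfolding sin2sum_def by (simp add: sum_distrib_left)
  finally have "D \<ge> (1/dmax^2) * (1/dmax^2) * sin2sum N th" .
  moreover have "sin2sum N th > 0" using adm unfolding admissible_def by auto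
  ultimately have Dpos: "D > 0" using dmax
    by (smt (verit) mult_pos_pos zero_less_divide_1_iff zero_less_power)
  have S: "S_bound Ts N R th = W / (Ts * D)"
    unfolding S_bound_def W_def D_def w_def by simp
  have "W / (Ts * (W^2/4)) \<le> W / (Ts * D)"
    using DW Dpos Wpos Ts by (intro divide_left_mono mult_left_mono mult_pos_pos) auto
  moreover have "W / (Ts * (W^2/4)) = 4 / (Ts * W)"
    using Wpos Ts by (simp add: field_simps power2_eq_square)
  moreover have "4 / (Ts * (real N / dmin^2)) \<le> 4 / (Ts * W)"
    using Wle Wpos Ts by (intro divide_left_mono mult_left_mono mult_pos_pos) auto
  moreover have "4 / (Ts * (real N / dmin^2)) = 4 * dmin^2 / (real N * Ts)"
    using d by (simp add: field_simps)
  ultimately show ?thesis using S by linarith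
qed

lemma adm_reg:
  assumes "N \<ge> 3" "0 < dmin" "dmin < dmax"
  shows "admissible dmin dmax N (\<lambda>k. dmin) (\<lambda>k. 2*pi*real k/real N - 2*pi/real N)"
proof -
  have Np: "real N > 0" using assms by simp
  have rng: "0 \<le> 2*pi*real k/real N - 2*pi/real N \<and> 2*pi*real k/real N - 2*pi/real N < 2*pi"
    if "k \<in> {1..N}" for k
  proof -
    have "1 \<le> real k" "real k \<le> real N" using that by auto
    then have "2*pi*1 \<le> 2*pi*real k" "2*pi*real k \<le> 2*pi*real N" by simp_all
    then have a: "2*pi/real N \<le> 2*pi*real k/real N" and b: "2*pi*real k/real N \<le> 2*pi"
      using Np by (simp_all add: divide_right_mono field_simps)
    have "2*pi/real N > 0" using Np by simp
    then show ?thesis using a b by linarith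
  qed
  have "sin2sum N (\<lambda>k. 2*pi*real k/real N - 2*pi/real N) > 0"
  proof -
    have "(real N)^2 > 0" using Np by simp
    then show ?thesis using sin2sum_reg[OF assms(1)] by linarith
  qed
  then show ?thesis unfolding admissible_def using rng assms by auto
qed

lemma GDOP_LB:
  assumes "dmin \<le> r" "admissible dmin dmax N (\<lambda>k. r) th" "0 < dmin" "N \<ge> 1" "Ts > 0"
  shows "GDOP Ts N r th \<ge> 4 * dmin^2 / (real N * Ts)"
proof -
  have sp: "sin2sum N th > 0" using assms(2) unfolding admissible_def by auto
  have sl: "sin2sum N th \<le> (real N)^2/4" using sin2sum_le[of N th] by simp
  have Np: "real N > 0" using assms by simp
  have r2: "dmin^2 \<le> r^2" using assms by (intro power_mono) auto
  have "real N * r^2 / (Ts * ((real N)^2/4)) \<le> real N * r^2 / (Ts * sin2sum N th)"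
    using sl sp assms Np by (intro divide_left_mono mult_left_mono mult_pos_pos) auto
  moreover have "real N * r^2 / (Ts * ((real N)^2/4)) = 4 * r^2 / (real N * Ts)"
    using Np assms by (simp add: field_simps power2_eq_square)
  moreover have "4 * dmin^2 / (real N * Ts) \<le> 4 * r^2 / (real N * Ts)"
    using r2 Np assms by (intro divide_right_mono) auto
  ultimately show ?thesis unfolding GDOP_def by linarith
qed

theorem mainTheorem7:
  fixes dmin dmax Ts :: real and N :: nat
  assumes "0 < dmin" and "dmin < dmax" and "N \<ge> 3" and "Ts > 0"
  shows "(\<forall>R th. admissible dmin dmax N R th \<longrightarrow>
            S_bound Ts N R th \<ge> 4 * dmin^2 / (real N * Ts))
       \<and> S_bound Ts N (\<lambda>k. dmin) (\<lambda>k. 2 * pi * real k / real N) = 4 * dmin^2 / (real N * Ts)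
       \<and> Min_on {S_bound Ts N R th | R th. admissible dmin dmax N R th} (4 * dmin^2 / (real N * Ts))
       \<and> Min_on {GDOP Ts N r th | r th. dmin \<le> r \<and> r \<le> dmax \<and>
                    admissible dmin dmax N (\<lambda>k. r) th} (4 * dmin^2 / (real N * Ts))"
proof -
  let ?t = "\<lambda>k. 2*pi*real k/real N - 2*pi/real N"
  have N1: "N \<ge> 1" using assms by simp
  have P1: "\<forall>R th. admissible dmin dmax N R th \<longrightarrow> S_bound Ts N R th \<ge> 4 * dmin^2 / (real N * Ts)"
    using LB[OF _ assms(1) N1 assms(4)] by blast
  have Sr: "S_bound Ts N (\<lambda>k. dmin) ?t = 4 * dmin^2 / (real N * Ts)"
    by (rule S_reg[OF assms(3) assms(1) assms(4)])
  have P2: "S_bound Ts N (\<lambda>k. dmin) (\<lambda>k. 2 * pi * real k / real N) = 4 * dmin^2 / (real N * Ts)"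
    using Sr shiftS[of Ts N "\<lambda>k. dmin" "\<lambda>k. 2 * pi * real k / real N" "2*pi/real N"] by simp
  have ad: "admissible dmin dmax N (\<lambda>k. dmin) ?t" by (rule adm_reg[OF assms(3,1,2)])
  have P3: "Min_on {S_bound Ts N R th | R th. admissible dmin dmax N R th} (4 * dmin^2 / (real N * Ts))"
    unfolding Min_on_def
  proof
    show "4 * dmin^2 / (real N * Ts) \<in> {S_bound Ts N R th | R th. admissible dmin dmax N R th}"
      using ad Sr by force
    show "\<forall>x\<in>{S_bound Ts N R th | R th. admissible dmin dmax N R th}. 4 * dmin^2 / (real N * Ts) \<le> x"
      using P1 by blast
  qed
  have Gr: "GDOP Ts N dmin ?t = 4 * dmin^2 / (real N * Ts)"
  proof -
    have s: "sin2sum N ?t = (real N)^2/4" using sin2sum_reg[OF assms(3)] by simp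
    have "real N > 0" using assms by simp
    then show ?thesis unfolding GDOP_def s using assms by (simp add: field_simps power2_eq_square)
  qed
  have P4: "Min_on {GDOP Ts N r th | r th. dmin \<le> r \<and> r \<le> dmax \<and>
                    admissible dmin dmax N (\<lambda>k. r) th} (4 * dmin^2 / (real N * Ts))"
    unfolding Min_on_def
  proof
    show "4 * dmin^2 / (real N * Ts) \<in> {GDOP Ts N r th | r th. dmin \<le> r \<and> r \<le> dmax \<and>
                    admissible dmin dmax N (\<lambda>k. r) th}"
      using Gr ad assms by force
    show "\<forall>x\<in>{GDOP Ts N r th | r th. dmin \<le> r \<and> r \<le> dmax \<and>
                    admissible dmin dmax N (\<lambda>k. r) th}. 4 * dmin^2 / (real N * Ts) \<le> x"
      using GDOP_LB[OF _ _ assms(1) N1 assms(4)] by blast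
  qed
  show ?thesis using P1 P2 P3 P4 by blast
qed

end
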